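(* Let $m=2$ with $\mathcal P=\{\mathcal P_1,\mathcal P_2\}$ and cluster natural frequencies $\omega_1\le\omega_2$. Let $\bar\omega=\omega_2-\omega_1$ and $$\bar a=\sum_{k\in\mathcal P_2}a_{ik}+\sum_{k\in\mathcal P_1}a_{jk}$$ for any $i\in\mathcal P_1$, $j\in\mathcal P_2$, and assume $\bar\omega>\bar a$. If $$J_{\text{intra}}=\partial F/\partial x_{\text{intra}}\big|_{x_{\text{intra}}=0}=\alpha I$$ for some constant $\alpha<0$, then $\mathcal S_{\mathcal P}$ is locally exponentially stable.
   Context: **Graph and dynamics.** Let $\mathcal G=(\mathcal V,\mathcal E)$ be a connected, undirected, weighted graph with $\mathcal V=\{1,\dots,n\}$ and no self-loops. Its adjacency matrix $A=[a_{ij}]$ is symmetric, with $a_{ij}>0$ if $(i,j)\in\mathcal E$ and $0$ otherwise. The Kuramoto dynamics are $$\dot\theta_i=\omega_i+\sum_{j\neq i}a_{ij}\sin(\theta_j-\theta_i),$$ with $\theta_i\in\mathbb S^1$ and $\omega_i>0$. **Partition and manifold.** $\mathcal P=\{\mathcal P_1,\dots,\mathcal P_m\}$ is a partition of $\mathcal V$, and each induced subgraph $\mathcal G_k=(\mathcal P_k,\mathcal E_k)$ is connected. The cluster synchronization manifold is $$\mathcal S_{\mathcal P}=\{\theta:\theta_i=\theta_j\ \text{for all } i,j\text{ in the same cluster}\}.$$ **Standing assumptions.** - (A2) Equal natural frequencies within each cluster; write $\omega_k$ for the value on $\mathcal P_k$. - (A3) $\sum_{k\in\mathcal P_\ell}(a_{ik}-a_{jk})=0$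 for all $i,j\in\mathcal P_z$ and all $z\ne\ell$. **Stability notion.** $\mathcal S_{\mathcal P}$ is locally exponentially stable if there exist $\delta,c,\lambda>0$ with $$\mathrm{dist}(\theta(t),\mathcal S_{\mathcal P})\le ce^{-\lambda t}\,\mathrm{dist}(\theta(0),\mathcal S_{\mathcal P})$$ whenever $\mathrm{dist}(\theta(0),\mathcal S_{\mathcal P})<\delta$. **Coordinates.** Let $\mathcal T_k=(\mathcal P_k,\mathcal E_{\text{span},k})$ be spanning trees of $\mathcal G_k$. Let $\mathcal T$ be a spanning tree of $\mathcal G$ with edges $\bigcup_k\mathcal E_{\text{span},k}\cup\mathcal E_{\text{inter}}$ and $|\mathcal E_{\text{inter}}|=m-1$. Write $x_{ij}=\theta_j-\theta_i$. - $x_{\text{intra}}$ stacks $x_{ij}$ over $(i,j)\in\mathcal E_{\text{span},k}$, $i<j$, for $k=1,\dots,m$. - $x_{\text{inter}}$ stacks $x_{ij}$ over $(i,j)\in\mathcal E_{\text{inter}}$. - Every $x_{ij}$ equals a signed sum, $\mathrm{diff}(\mathrm p(i,j))$, of these coordinates along the unique path $\mathrm p(i,j)$ in $\mathcal T$. **Intra-cluster dynamics.** For $(i,j)\in\mathcal E_{\text{span},k}$, $\dot x_{ij}=F^{(k)}_{ij}+G^{(k)}_{ij}$, where $$F^{(k)}_{ij}=\sum_{z\in\mathcal P_k}\big[a_{jz}\sin(\mathrm{diff}(\mathrm p(j,z)))-a_{iz}\sin(\mathrm{diff}(\mathrm p(i,z)))\big],$$ and $G^{(k)}_{ij}$ is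 the same sum over $z\notin\mathcal P_k$. Stacking gives $\dot x_{\text{intra}}=F(x_{\text{intra}})+G(x_{\text{intra}},x_{\text{inter}})$. *)

theory Defs
  imports "HOL-Analysis.Analysis"
begin

text \<open>Vertices are the elements of a finite linearly ordered type 'n; phases are
lifted to real vectors (covering space of the torus).\<close>

definition kuramoto :: "('n::finite \<Rightarrow> 'n \<Rightarrow> real) \<Rightarrow> ('n \<Rightarrow> real) \<Rightarrow> real^'n \<Rightarrow> real^'n" where
  "kuramoto a \<omega> \<theta> = (\<chi> i. \<omega> i + (\<Sum>j\<in>UNIV - {i}. a i j * sin (\<theta>$j - \<theta>$i)))"

definition connected_on :: "'n set \<Rightarrow> ('n \<times> 'n) set \<Rightarrow> bool" where
  "connected_on V E \<longleftrightarrow> (\<forall>i\<in>V. \<forall>j\<in>V. (i, j) \<in> ((E \<union> E\<inverse>) \<inter> (V \<times> V))\<^sup>*)"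

definition graph_edges :: "('n \<Rightarrow> 'n \<Rightarrow> real) \<Rightarrow> ('n \<times> 'n) set" where
  "graph_edges a = {(i, j). a i j > 0}"

definition spanning_tree :: "('n::{finite,linorder} \<Rightarrow> 'n \<Rightarrow> real) \<Rightarrow> 'n set \<Rightarrow> ('n \<times> 'n) set \<Rightarrow> bool" where
  "spanning_tree a P E \<longleftrightarrow>
     E \<subseteq> {(i, j). i \<in> P \<and> j \<in> P \<and> i < j \<and> a i j > 0} \<and>
     connected_on P E \<and> card E = card P - 1"

text \<open>diff(p(u,v)): the signed sum of the tree coordinates x along the unique
tree path from u to v, i.e. the difference phi v - phi u of any potential phi
whose increments along the tree edges are the coordinates x.\<close>
definition path_diff :: "('n::finite \<times> 'n) set \<Rightarrow> real^('n \<times> 'n) \<Rightarrow> 'n \<Rightarrow> 'n \<Rightarrow> real" where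
  "path_diff E x u v = (SOME d. \<exists>\<phi>::'n \<Rightarrow> real.
      (\<forall>(p, q)\<in>E. \<phi> q - \<phi> p = x $ (p, q)) \<and> d = \<phi> v - \<phi> u)"

text \<open>Intra-cluster part F of the intra-cluster dynamics for m = 2, in the
coordinates x_intra (components indexed by the tree edges E1 \<union> E2; the other
components of the vector are unused and F is set to 0 there).\<close>
definition F_intra :: "('n::finite \<Rightarrow> 'n \<Rightarrow> real) \<Rightarrow> 'n set \<Rightarrow> 'n set \<Rightarrow> ('n \<times> 'n) set \<Rightarrow> ('n \<times> 'n) set
    \<Rightarrow> real^('n \<times> 'n) \<Rightarrow> real^('n \<times> 'n)" where
  "F_intra a P1 P2 E1 E2 x = (\<chi> e. (case e of (i, j) \<Rightarrow>
     if e \<in> E1 then (\<Sum>z\<in>P1. a j z * sin (path_diff (E1 \<union> E2) x j z) - a i z * sin (path_diff (E1 \<union> E2) x i z))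
     else if e \<in> E2 then (\<Sum>z\<in>P2. a j z * sin (path_diff (E1 \<union> E2) x j z) - a i z * sin (path_diff (E1 \<union> E2) x i z))
     else 0))"

definition sync_manifold :: "'n::finite set set \<Rightarrow> (real^'n) set" where
  "sync_manifold Ps = {\<theta>. \<forall>P\<in>Ps. \<forall>i\<in>P. \<forall>j\<in>P. \<exists>k::int. \<theta>$j - \<theta>$i = 2 * pi * of_int k}"

definition locally_exp_stable :: "(real^('n::finite) \<Rightarrow> real^'n) \<Rightarrow> (real^'n) set \<Rightarrow> bool" where
  "locally_exp_stable f S \<longleftrightarrow>
     (\<exists>\<delta>>0. \<exists>c>0. \<exists>lam>0. \<forall>\<theta>::real \<Rightarrow> real^'n.
        (\<forall>t\<ge>0. (\<theta> has_vector_derivative f (\<theta> t)) (at t within {0..})) \<and> infdist (\<theta> 0) S < \<delta>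
        \<longrightarrow> (\<forall>t\<ge>0. infdist (\<theta> t) S \<le> c * exp (- lam * t) * infdist (\<theta> 0) S))"

end

theory Submission
  imports Defs "HOL-Analysis.Analysis"
begin


typedef (overloaded) ('n::finite) endo = "UNIV :: ((real^'n) \<Rightarrow>\<^sub>L (real^'n)) set" morphisms Rep_endo Abs_endo by simp

setup_lifting type_definition_endo

instantiation endo :: (finite) real_normed_vector
begin
lift_definition norm_endo :: "'a endo \<Rightarrow> real" is norm .
lift_definition minus_endo :: "'a endo \<Rightarrow> 'a endo \<Rightarrow> 'a endo" is "(-)" .
lift_definition uminus_endo :: "'a endo \<Rightarrow> 'a endo" is "uminus" .
lift_definition zero_endo :: "'a endo" is "0" .
lift_definition plus_endo :: "'a endo \<Rightarrow> 'a endo \<Rightarrow> 'a endo" is "(+)" .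
lift_definition scaleR_endo :: "real \<Rightarrow> 'a endo \<Rightarrow> 'a endo" is "scaleR" .
definition dist_endo :: "'a endo \<Rightarrow> 'a endo \<Rightarrow> real" where "dist_endo a b = norm (a - b)"
definition sgn_endo :: "'a endo \<Rightarrow> 'a endo" where "sgn_endo x = scaleR (inverse (norm x)) x"
definition uniformity_endo :: "('a endo \<times> 'a endo) filter" where
  "uniformity_endo = (INF e\<in>{0 <..}. principal {(x, y). dist x y < e})"
definition open_endo :: "'a endo set \<Rightarrow> bool" where
  "open_endo S = (\<forall>x\<in>S. \<forall>\<^sub>F (x', y) in uniformity. x' = x \<longrightarrow> y \<in> S)"
instance
  apply standard
  unfolding dist_endo_def open_endo_def sgn_endo_def uniformity_endo_def
  apply (rule refl | (transfer, force simp: norm_triangle_ineq algebra_simps))+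
  done
end

lemma zero_ne_id_blinfun: "(0::(real^'n::finite) \<Rightarrow>\<^sub>L (real^'n)) \<noteq> id_blinfun"
proof
  assume "(0::(real^'n::finite) \<Rightarrow>\<^sub>L (real^'n)) = id_blinfun"
  hence "blinfun_apply (0::(real^'n::finite) \<Rightarrow>\<^sub>L (real^'n)) 1 = blinfun_apply id_blinfun 1" by simp
  thus False by simp
qed

instantiation endo :: (finite) real_normed_algebra_1
begin
lift_definition times_endo :: "'a endo \<Rightarrow> 'a endo \<Rightarrow> 'a endo" is "(o\<^sub>L)" .
lift_definition one_endo :: "'a endo" is "id_blinfun" .
instance
  apply standard
  apply (transfer, rule blinfun_eqI, simp add: blinfun.bilinear_simps)
  apply (transfer, rule blinfun_eqI, simp add: blinfun.bilinear_simps)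
  apply (transfer, rule blinfun_eqI, simp add: blinfun.bilinear_simps)
  apply (transfer, rule blinfun_eqI, simp add: blinfun.bilinear_simps)
  apply (transfer, rule blinfun_eqI, simp add: blinfun.bilinear_simps)
  apply (transfer, rule blinfun_eqI, simp add: blinfun.bilinear_simps)
  apply (transfer, rule blinfun_eqI, simp add: blinfun.bilinear_simps)
  apply (transfer, rule zero_ne_id_blinfun)
  apply (transfer, rule norm_blinfun_compose)
  apply (transfer, simp)
  done
end

instance endo :: (finite) banach
proof
  fix X :: "nat \<Rightarrow> 'a endo"
  assume "Cauchy X"
  hence "Cauchy (\<lambda>n. Rep_endo (X n))"
    unfolding Cauchy_def dist_norm by (simp add: norm_endo.rep_eq minus_endo.rep_eq)
  then obtain L where L: "(\<lambda>n. Rep_endo (X n)) \<longlonglongrightarrow> L"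
    using convergent_eq_Cauchy by blast
  have "X \<longlonglongrightarrow> Abs_endo L"
    using L unfolding lim_sequentially dist_norm
    by (simp add: norm_endo.rep_eq minus_endo.rep_eq Abs_endo_inverse)
  thus "convergent X" by (auto simp: convergent_def)
qed

lift_definition app :: "'n::finite endo \<Rightarrow> real^'n \<Rightarrow> real^'n" is blinfun_apply .

lemma bb_app: "bounded_bilinear (app :: 'n::finite endo \<Rightarrow> _)"
proof -
  have "bounded_bilinear (\<lambda>(A::'n endo) x. blinfun_apply (Rep_endo A) x)"
    apply (rule bounded_bilinear.intro)
    apply (simp_all add: plus_endo.rep_eq scaleR_endo.rep_eq blinfun.bilinear_simps)
    apply (rule exI[where x=1]) apply (simp add: norm_endo.rep_eq norm_blinfun)
    done
  thus ?thesis by (simp add: app.rep_eq[abs_def])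
qed

lemma app_mult: "app (A * B) x = app A (app B x)"
  by transfer simp
lemma app_one[simp]: "app 1 x = x" by transfer simp
lemma norm_app: "norm (app A x) \<le> norm A * norm x"
  by transfer (rule norm_blinfun)




lemma rr_bound: "\<bar>sin (b + d) - sin b - cos b * d\<bar> \<le> (d::real)\<^sup>2"
proof -
  have s: "\<bar>sin d - d\<bar> \<le> d\<^sup>2 / 2"
    using Maclaurin_sin_bound[of d 2] by (simp add: sin_coeff_def numeral_2_eq_2 power2_eq_square)
  have c1: "\<bar>cos d - 1\<bar> \<le> d\<^sup>2 / 2"
  proof -
    have "cos d = 1 - 2 * (sin (d/2))\<^sup>2"
      using cos_double_sin[of "d/2"] by simp
    moreover have "(sin (d/2))\<^sup>2 \<le> (d/2)\<^sup>2"
      using abs_sin_x_le_abs_x[of "d/2"] by (metis abs_le_square_iff)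
    ultimately show ?thesis by (simp add: power_divide)
  qed
  have "sin (b + d) - sin b - cos b * d = sin b * (cos d - 1) + cos b * (sin d - d)"
    by (simp add: sin_add algebra_simps)
  also have "\<bar>\<dots>\<bar> \<le> \<bar>sin b\<bar> * \<bar>cos d - 1\<bar> + \<bar>cos b\<bar> * \<bar>sin d - d\<bar>"
    by (metis abs_mult abs_triangle_ineq)
  also have "\<dots> \<le> 1 * (d\<^sup>2/2) + 1 * (d\<^sup>2/2)"
  proof (rule add_mono)
    show "\<bar>sin b\<bar> * \<bar>cos d - 1\<bar> \<le> 1 * (d\<^sup>2/2)" by (rule mult_mono) (use c1 in auto)
    show "\<bar>cos b\<bar> * \<bar>sin d - d\<bar> \<le> 1 * (d\<^sup>2/2)" by (rule mult_mono) (use s in auto)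
  qed
  finally show ?thesis by simp
qed

locale kur =
  fixes a :: "'n::finite \<Rightarrow> 'n \<Rightarrow> real" and P1 P2 :: "'n set" and om :: "'n \<Rightarrow> real"
    and \<omega>1 \<omega>2 \<alpha> s1 s2 :: real
  assumes sym: "\<And>i j. a i j = a j i" and nonneg: "\<And>i j. a i j \<ge> 0" and noloop: "\<And>i. a i i = 0"
    and disj: "P1 \<inter> P2 = {}" and cover: "P1 \<union> P2 = UNIV" and ne1: "P1 \<noteq> {}" and ne2: "P2 \<noteq> {}"
    and om1: "\<And>i. i \<in> P1 \<Longrightarrow> om i = \<omega>1" and om2: "\<And>i. i \<in> P2 \<Longrightarrow> om i = \<omega>2"
    and row1: "\<And>i. i \<in> P1 \<Longrightarrow> (\<Sum>k\<in>P2. a i k) = s1"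
    and row2: "\<And>i. i \<in> P2 \<Longrightarrow> (\<Sum>k\<in>P1. a i k) = s2"
    and lap1: "\<And>d j. (\<Sum>z\<in>P1. d z) = 0 \<Longrightarrow> j \<in> P1 \<Longrightarrow> (\<Sum>z\<in>P1. a j z * (d z - d j)) = \<alpha> * d j"
    and lap2: "\<And>d j. (\<Sum>z\<in>P2. d z) = 0 \<Longrightarrow> j \<in> P2 \<Longrightarrow> (\<Sum>z\<in>P2. a j z * (d z - d j)) = \<alpha> * d j"
    and gap: "\<omega>2 - \<omega>1 > s1 + s2" and spos: "s1 + s2 > 0" and aneg: "\<alpha> < 0"
begin

definition "cl i = (if i \<in> P1 then P1 else P2)"
definition "mnf g P = (\<Sum>i\<in>P. g i) / real (card P)"
definition "cent (\<theta>::real^'n) = (\<chi> i. \<theta>$i - mnf (($) \<theta>) (cl i))"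
definition "ph (\<theta>::real^'n) = mnf (($) \<theta>) P2 - mnf (($) \<theta>) P1"
definition "Mop (u::real^'n) = (\<chi> i. \<Sum>z\<in>UNIV - cl i. a i z * (u$z - u$i))"
definition "sc i = (if i \<in> P1 then s1 else s2)"
definition "psi \<phi> i = (if i \<in> P1 then \<phi> else - \<phi>)"
definition "rr b d = sin (b + d) - sin b - cos b * d"
definition "bet \<theta> i j = (if j \<in> cl i then 0 else psi (ph \<theta>) i)"
definition "ee \<theta> i = (\<Sum>j\<in>UNIV. a i j * rr (bet \<theta> i j) ((cent \<theta>)$j - (cent \<theta>)$i))"

lemma P2_eq: "UNIV - P1 = P2" using disj cover by blast
lemma P1_eq: "UNIV - P2 = P1" using disj cover by blast
lemma notP1: "j \<in> P2 \<Longrightarrow> j \<notin> P1" using disj by blast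
lemma fin[simp]: "finite (P::'n set)" by simp
lemma cardpos1: "real (card P1) > 0" using ne1 by (simp add: card_gt_0_iff)
lemma cardpos2: "real (card P2) > 0" using ne2 by (simp add: card_gt_0_iff)

lemma cl_cases: "cl i = P1 \<and> i \<in> P1 \<or> cl i = P2 \<and> i \<in> P2"
  using cover by (auto simp: cl_def)

lemma in_cl: "i \<in> cl i" using cl_cases by auto

lemma key1: "\<theta>$j - \<theta>$i = bet \<theta> i j + ((cent \<theta>)$j - (cent \<theta>)$i)"
  using disj cover
  by (auto simp: bet_def cent_def cl_def psi_def ph_def)

lemma cent_sum: "i \<in> {P1, P2} \<Longrightarrow> (\<Sum>j\<in>i. (cent \<theta>)$j) = 0"
proof -
  assume i: "i \<in> {P1,P2}"
  have cl: "\<And>j. j \<in> i \<Longrightarrow> cl j = i" using i disj by (auto simp: cl_def)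
  have "(\<Sum>j\<in>i. (cent \<theta>)$j) = (\<Sum>j\<in>i. \<theta>$j) - real (card i) * mnf (($) \<theta>) i"
    by (simp add: cent_def cl sum_subtractf)
  also have "\<dots> = 0" using i cardpos1 cardpos2 by (auto simp: mnf_def)
  finally show ?thesis .
qed

lemma lap_cl: "(\<Sum>z\<in>cl i. d z) = 0 \<Longrightarrow> (\<Sum>z\<in>cl i. a i z * (d z - d i)) = \<alpha> * d i"
  using cl_cases[of i] lap1 lap2 by auto

lemma row_cl: "(\<Sum>k\<in>UNIV - cl i. a i k) = sc i"
  using cl_cases[of i] row1 row2 P2_eq P1_eq by (auto simp: sc_def)

lemma cent_sum_cl: "(\<Sum>j\<in>cl i. (cent \<theta>)$j) = 0"
  using cl_cases[of i] cent_sum by auto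

lemma split_UNIV: "(\<Sum>j\<in>UNIV. g j) = (\<Sum>j\<in>cl i. g j) + (\<Sum>j\<in>UNIV - cl i. g j)"
  by (simp add: sum.subset_diff[of "cl i" UNIV g] add.commute)

lemma kA: "(kuramoto a om \<theta>)$i = om i + sc i * sin (psi (ph \<theta>) i) + \<alpha> * (cent \<theta>)$i
     + cos (ph \<theta>) * (Mop (cent \<theta>))$i + ee \<theta> i"
proof -
  let ?u = "cent \<theta>" and ?b = "bet \<theta> i"
  have "(\<Sum>j\<in>UNIV - {i}. a i j * sin (\<theta>$j - \<theta>$i)) = (\<Sum>j\<in>UNIV. a i j * sin (\<theta>$j - \<theta>$i))"
    by (simp add: sum.remove[of UNIV i] noloop)
  also have "\<dots> = (\<Sum>j\<in>UNIV. a i j * sin (?b j)) + (\<Sum>j\<in>UNIV. a i j * (cos (?b j) * (?u$j - ?u$i))) + ee \<theta> i"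
    unfolding ee_def rr_def key1[of \<theta> _ i]
    by (simp add: sum.distrib[symmetric] algebra_simps)
  also have "(\<Sum>j\<in>UNIV. a i j * sin (?b j)) = sc i * sin (psi (ph \<theta>) i)"
    using split_UNIV[where g="\<lambda>j. a i j * sin (?b j)" and i=i] row_cl[of i]
    by (simp add: bet_def sum_distrib_right[symmetric])
  also have "(\<Sum>j\<in>UNIV. a i j * (cos (?b j) * (?u$j - ?u$i))) = \<alpha> * ?u$i + cos (ph \<theta>) * (Mop ?u)$i"
  proof -
    have 1: "(\<Sum>j\<in>cl i. a i j * (cos (?b j) * (?u$j - ?u$i))) = \<alpha> * ?u$i"
      using lap_cl[where i=i and d="\<lambda>j. ?u$j", OF cent_sum_cl] by (simp add: bet_def)
    have "cos (psi (ph \<theta>) i) = cos (ph \<theta>)" by (simp add: psi_def)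
    hence 2: "(\<Sum>j\<in>UNIV - cl i. a i j * (cos (?b j) * (?u$j - ?u$i))) = cos (ph \<theta>) * (Mop ?u)$i"
      by (simp add: bet_def Mop_def sum_distrib_left algebra_simps)
    show ?thesis using split_UNIV[where g="\<lambda>j. a i j * (cos (?b j) * (?u$j - ?u$i))" and i=i] 1 2 by simp
  qed
  finally show ?thesis by (simp add: kuramoto_def algebra_simps)
qed

lemma Mop_P1: "i \<in> P1 \<Longrightarrow> (Mop u)$i = (\<Sum>z\<in>P2. a i z * (u$z - u$i))"
  by (simp add: Mop_def cl_def P2_eq)
lemma Mop_P2: "i \<in> P2 \<Longrightarrow> (Mop u)$i = (\<Sum>z\<in>P1. a i z * (u$z - u$i))"
  using notP1[of i] by (simp add: Mop_def cl_def P1_eq)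

lemma Mop_sum1: "(\<Sum>i\<in>P1. (Mop u)$i) = s2 * (\<Sum>z\<in>P2. u$z) - s1 * (\<Sum>i\<in>P1. u$i)"
proof -
  have "(\<Sum>i\<in>P1. (Mop u)$i) = (\<Sum>i\<in>P1. \<Sum>z\<in>P2. a i z * u$z) - (\<Sum>i\<in>P1. u$i * (\<Sum>z\<in>P2. a i z))"
    by (simp add: Mop_P1 sum_subtractf sum_distrib_left algebra_simps)
  also have "(\<Sum>i\<in>P1. \<Sum>z\<in>P2. a i z * u$z) = (\<Sum>z\<in>P2. u$z * (\<Sum>i\<in>P1. a z i))"
    by (subst sum.swap) (simp add: sum_distrib_left sym mult.commute)
  also have "\<dots> = s2 * (\<Sum>z\<in>P2. u$z)" by (simp add: row2 sum_distrib_left mult.commute)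
  also have "(\<Sum>i\<in>P1. u$i * (\<Sum>z\<in>P2. a i z)) = s1 * (\<Sum>i\<in>P1. u$i)"
    by (simp add: row1 sum_distrib_left mult.commute)
  finally show ?thesis .
qed

lemma Mop_sum2: "(\<Sum>i\<in>P2. (Mop u)$i) = s1 * (\<Sum>z\<in>P1. u$z) - s2 * (\<Sum>i\<in>P2. u$i)"
proof -
  have "(\<Sum>i\<in>P2. (Mop u)$i) = (\<Sum>i\<in>P2. \<Sum>z\<in>P1. a i z * u$z) - (\<Sum>i\<in>P2. u$i * (\<Sum>z\<in>P1. a i z))"
    by (simp add: Mop_P2 sum_subtractf sum_distrib_left algebra_simps)
  also have "(\<Sum>i\<in>P2. \<Sum>z\<in>P1. a i z * u$z) = (\<Sum>z\<in>P1. u$z * (\<Sum>i\<in>P2. a z i))"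
    by (subst sum.swap) (simp add: sum_distrib_left sym mult.commute)
  also have "\<dots> = s1 * (\<Sum>z\<in>P1. u$z)" by (simp add: row1 sum_distrib_left mult.commute)
  also have "(\<Sum>i\<in>P2. u$i * (\<Sum>z\<in>P1. a i z)) = s2 * (\<Sum>i\<in>P2. u$i)"
    by (simp add: row2 sum_distrib_left mult.commute)
  finally show ?thesis .
qed

lemma Mop_cent_sum: "i \<in> {P1, P2} \<Longrightarrow> (\<Sum>j\<in>i. (Mop (cent \<theta>))$j) = 0"
  using Mop_sum1 Mop_sum2 cent_sum by auto

lemma sum_f: "i \<in> {P1,P2} \<Longrightarrow> (\<Sum>j\<in>i. (kuramoto a om \<theta>)$j) =
   (\<Sum>j\<in>i. om j + sc j * sin (psi (ph \<theta>) j)) + (\<Sum>j\<in>i. ee \<theta> j)"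
  unfolding kA using cent_sum[of i \<theta>] Mop_cent_sum[of i \<theta>]
  by (simp add: sum.distrib sum_distrib_left[symmetric])

lemma mn_f1: "mnf (($) (kuramoto a om \<theta>)) P1 = \<omega>1 + s1 * sin (ph \<theta>) + mnf (ee \<theta>) P1"
proof -
  have "(\<Sum>j\<in>P1. om j + sc j * sin (psi (ph \<theta>) j)) = real (card P1) * (\<omega>1 + s1 * sin (ph \<theta>))"
    by (simp add: om1 sc_def psi_def)
  thus ?thesis using sum_f[of P1 \<theta>] cardpos1 ne1 by (simp add: mnf_def add_divide_distrib)
qed

lemma mn_f2: "mnf (($) (kuramoto a om \<theta>)) P2 = \<omega>2 - s2 * sin (ph \<theta>) + mnf (ee \<theta>) P2"
proof -
  have "(\<Sum>j\<in>P2. om j + sc j * sin (psi (ph \<theta>) j)) = real (card P2) * (\<omega>2 - s2 * sin (ph \<theta>))"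
    by (simp add: om2 sc_def psi_def notP1)
  thus ?thesis using sum_f[of P2 \<theta>] cardpos2 ne2 by (simp add: mnf_def add_divide_distrib diff_divide_distrib)
qed

lemma cent_f: "(cent (kuramoto a om \<theta>))$i = \<alpha> * (cent \<theta>)$i + cos (ph \<theta>) * (Mop (cent \<theta>))$i
     + (ee \<theta> i - mnf (ee \<theta>) (cl i))"
proof -
  have "mnf (($) (kuramoto a om \<theta>)) (cl i) = om i + sc i * sin (psi (ph \<theta>) i) + mnf (ee \<theta>) (cl i)"
    using cl_cases[of i] mn_f1 mn_f2 om1 om2 notP1 by (auto simp: sc_def psi_def)
  thus ?thesis by (simp add: cent_def kA)
qed

lemma ph_f: "ph (kuramoto a om \<theta>) = (\<omega>2 - \<omega>1) - (s1 + s2) * sin (ph \<theta>) + (mnf (ee \<theta>) P2 - mnf (ee \<theta>) P1)"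
  by (simp add: ph_def mn_f1 mn_f2 algebra_simps)

definition "AA = (\<Sum>i\<in>UNIV. \<Sum>j\<in>UNIV. a i j)"

lemma AA_nonneg: "AA \<ge> 0" unfolding AA_def by (intro sum_nonneg) (simp add: nonneg)

lemma ee_bound: "\<bar>ee \<theta> i\<bar> \<le> 4 * AA * (norm (cent \<theta>))\<^sup>2"
proof -
  let ?u = "cent \<theta>"
  have d: "(?u$j - ?u$i)\<^sup>2 \<le> 4 * (norm ?u)\<^sup>2" for j
  proof -
    have "\<bar>?u$j - ?u$i\<bar> \<le> 2 * norm ?u"
      using component_le_norm_cart[of ?u j] component_le_norm_cart[of ?u i] by linarith
    hence "(?u$j - ?u$i)\<^sup>2 \<le> (2 * norm ?u)\<^sup>2"
      by (metis abs_le_square_iff abs_of_nonneg norm_ge_zero mult_nonneg_nonneg zero_le_numeral)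
    thus ?thesis by (simp add: power_mult_distrib)
  qed
  have "\<bar>ee \<theta> i\<bar> \<le> (\<Sum>j\<in>UNIV. \<bar>a i j * rr (bet \<theta> i j) (?u$j - ?u$i)\<bar>)"
    unfolding ee_def by (rule sum_abs)
  also have "\<dots> \<le> (\<Sum>j\<in>UNIV. a i j * (4 * (norm ?u)\<^sup>2))"
  proof (rule sum_mono)
    fix j
    have "\<bar>rr (bet \<theta> i j) (?u$j - ?u$i)\<bar> \<le> 4 * (norm ?u)\<^sup>2"
      using rr_bound d[of j] unfolding rr_def by (meson order_trans)
    thus "\<bar>a i j * rr (bet \<theta> i j) (?u$j - ?u$i)\<bar> \<le> a i j * (4 * (norm ?u)\<^sup>2)"
      by (simp add: abs_mult nonneg mult_left_mono)
  qed
  also have "\<dots> = (\<Sum>j\<in>UNIV. a i j) * (4 * (norm ?u)\<^sup>2)" by (simp add: sum_distrib_right)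
  also have "\<dots> \<le> AA * (4 * (norm ?u)\<^sup>2)"
  proof (rule mult_right_mono)
    show "(\<Sum>j\<in>UNIV. a i j) \<le> AA" unfolding AA_def
      by (rule member_le_sum) (auto intro: sum_nonneg nonneg)
  qed simp
  finally show ?thesis by simp
qed

lemma mnf_bound: "finite P \<Longrightarrow> P \<noteq> {} \<Longrightarrow> (\<And>i. \<bar>g i\<bar> \<le> B) \<Longrightarrow> \<bar>mnf g P\<bar> \<le> B"
proof -
  assume F: "finite P" and P: "P \<noteq> {}" and b: "\<And>i. \<bar>g i\<bar> \<le> B"
  have cp: "real (card P) > 0" using P F by (simp add: card_gt_0_iff)
  have "\<bar>\<Sum>i\<in>P. g i\<bar> \<le> (\<Sum>i\<in>P. B)" by (rule order_trans[OF sum_abs sum_mono]) (rule b)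
  hence "\<bar>\<Sum>i\<in>P. g i\<bar> \<le> real (card P) * B" by simp
  thus ?thesis using cp by (simp add: mnf_def abs_divide divide_le_eq mult.commute)
qed

lemma mnee_bound: "\<bar>mnf (ee \<theta>) (cl i)\<bar> \<le> 4 * AA * (norm (cent \<theta>))\<^sup>2"
  using cl_cases[of i] ne1 ne2 by (intro mnf_bound ee_bound) auto

definition "K1 = 8 * AA * real CARD('n)"

lemma K1_nonneg: "K1 \<ge> 0" using AA_nonneg by (simp add: K1_def)

lemma R_bound: "norm (cent (kuramoto a om \<theta>) - (\<alpha> *\<^sub>R cent \<theta> + cos (ph \<theta>) *\<^sub>R Mop (cent \<theta>)))
     \<le> K1 * (norm (cent \<theta>))\<^sup>2"
proof -
  let ?R = "cent (kuramoto a om \<theta>) - (\<alpha> *\<^sub>R cent \<theta> + cos (ph \<theta>) *\<^sub>R Mop (cent \<theta>))"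
  have c: "\<bar>?R$i\<bar> \<le> 8 * AA * (norm (cent \<theta>))\<^sup>2" for i
  proof -
    have "?R$i = ee \<theta> i - mnf (ee \<theta>) (cl i)" by (simp add: cent_f)
    thus ?thesis using ee_bound[of \<theta> i] mnee_bound[of \<theta> i] by simp
  qed
  have "norm ?R \<le> (\<Sum>i\<in>UNIV. \<bar>?R$i\<bar>)" by (rule norm_le_l1_cart)
  also have "\<dots> \<le> (\<Sum>i\<in>(UNIV::'n set). 8 * AA * (norm (cent \<theta>))\<^sup>2)" by (rule sum_mono) (rule c)
  finally show ?thesis by (simp add: K1_def mult_ac)
qed

lemma rho_bound: "\<bar>ph (kuramoto a om \<theta>) - ((\<omega>2 - \<omega>1) - (s1 + s2) * sin (ph \<theta>))\<bar> \<le> 8 * AA * (norm (cent \<theta>))\<^sup>2"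
proof -
  obtain i1 i2 where "i1 \<in> P1" "i2 \<in> P2" using ne1 ne2 by blast
  hence "cl i1 = P1" "cl i2 = P2" using disj by (auto simp: cl_def)
  thus ?thesis using mnee_bound[of \<theta> i1] mnee_bound[of \<theta> i2] by (simp add: ph_f)
qed

lemma linear_mnf: "mnf (($) (x + y)) P = mnf (($) x) P + mnf (($) y) P"
  "mnf (($) (c *\<^sub>R x)) P = c * mnf (($) x) P"
  by (simp_all add: mnf_def sum.distrib add_divide_distrib sum_distrib_left)

lemma bl_cent: "bounded_linear cent"
  apply (rule linear_conv_bounded_linear[THEN iffD1])
  apply (rule linearI)
  by (simp_all add: cent_def vec_eq_iff linear_mnf algebra_simps)

lemma bl_ph: "bounded_linear ph"
  apply (rule linear_conv_bounded_linear[THEN iffD1])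
  apply (rule linearI)
  by (simp_all add: ph_def linear_mnf algebra_simps)

lemma bl_Mop: "bounded_linear Mop"
  apply (rule linear_conv_bounded_linear[THEN iffD1])
  apply (rule linearI)
  by (simp_all add: Mop_def vec_eq_iff sum.distrib[symmetric] sum_distrib_left algebra_simps)

definition "MM = Abs_endo (Blinfun Mop)"

lemma app_MM: "app MM u = Mop u"
  by (simp add: MM_def app.rep_eq Abs_endo_inverse bounded_linear_Blinfun_apply bl_Mop)

definition "wb = \<omega>2 - \<omega>1"
definition "ab = s1 + s2"
definition "hh x = - ln (wb - ab * sin x) / ab"
definition "HH = (\<bar>ln (wb - ab)\<bar> + \<bar>ln (wb + ab)\<bar>) / ab"
definition "EE s = exp (s *\<^sub>R MM)"
definition "BB = exp (HH * norm MM)"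

lemma ab_pos: "ab > 0" using spos by (simp add: ab_def)
lemma wb_gt: "wb - ab > 0" using gap by (simp add: ab_def wb_def)

lemma D_bounds: "wb - ab \<le> wb - ab * sin x" "wb - ab * sin x \<le> wb + ab"
proof -
  have "ab * sin x \<le> ab * 1" using ab_pos by (intro mult_left_mono) auto
  moreover have "ab * (-1) \<le> ab * sin x" using ab_pos by (intro mult_left_mono) auto
  ultimately show "wb - ab \<le> wb - ab * sin x" "wb - ab * sin x \<le> wb + ab" by auto
qed

lemma D_pos: "wb - ab * sin x > 0" using D_bounds(1)[of x] wb_gt by linarith

lemma hh_bound: "\<bar>hh x\<bar> \<le> HH"
proof -
  have l1: "ln (wb - ab) \<le> ln (wb - ab * sin x)" using D_bounds(1)[of x] wb_gt by (subst ln_le_cancel_iff) auto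
  have l2: "ln (wb - ab * sin x) \<le> ln (wb + ab)" using D_bounds(2)[of x] D_pos[of x] by (subst ln_le_cancel_iff) auto
  have "\<bar>ln (wb - ab * sin x)\<bar> \<le> \<bar>ln (wb - ab)\<bar> + \<bar>ln (wb + ab)\<bar>" using l1 l2 by linarith
  thus ?thesis using ab_pos by (simp add: hh_def HH_def abs_divide divide_right_mono)
qed

lemma HH_nonneg: "HH \<ge> 0" using ab_pos by (simp add: HH_def)

lemma hh_deriv: "(hh has_real_derivative (cos x / (wb - ab * sin x))) (at x within S)"
proof -
  have "((\<lambda>x. - ln (wb - ab * sin x) / ab) has_real_derivative
         (- ((- ab * cos x) / (wb - ab * sin x)) / ab)) (at x within S)"
    using D_pos[of x] by (auto intro!: derivative_eq_intros)
  moreover have "- ((- ab * cos x) / (wb - ab * sin x)) / ab = cos x / (wb - ab * sin x)"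
    using ab_pos D_pos[of x] by (simp add: field_simps)
  ultimately show ?thesis by (simp add: hh_def[abs_def])
qed

lemma BB_ge1: "BB \<ge> 1" using HH_nonneg by (simp add: BB_def)

lemma EE_bound: "\<bar>s\<bar> \<le> HH \<Longrightarrow> norm (EE s) \<le> BB"
proof -
  assume s: "\<bar>s\<bar> \<le> HH"
  have "norm (EE s) \<le> exp (norm (s *\<^sub>R MM))" unfolding EE_def by (rule norm_exp)
  also have "\<dots> \<le> BB" unfolding BB_def using s by (simp add: mult_right_mono)
  finally show ?thesis .
qed

lemma EE_inv: "app (EE s) (app (EE (-s)) v) = v"
proof -
  have "EE s * EE (-s) = 1" unfolding EE_def using exp_minus_inverse[of "s *\<^sub>R MM"] by simp
  thus ?thesis by (metis app_mult app_one)
qed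

lemma EE_comm: "app (EE s * MM) v = app (EE s) (Mop v)"
  by (simp add: app_mult app_MM)

abbreviation "ff \<equiv> kuramoto a om"
definition "Phi \<theta> t = hh (ph (\<theta> t))"
definition "WW \<theta> t = app (EE (- Phi \<theta> t)) (cent (\<theta> t))"
definition "Phid \<theta> t = ph (ff (\<theta> t)) * (cos (ph (\<theta> t)) / (wb - ab * sin (ph (\<theta> t))))"
definition "RR x = cent (ff x) - (\<alpha> *\<^sub>R cent x + cos (ph x) *\<^sub>R Mop (cent x))"

lemma W_deriv:
  assumes sol: "(\<theta> has_vector_derivative ff (\<theta> t)) (at t within S)"
  shows "(WW \<theta> has_vector_derivative
     (\<alpha> *\<^sub>R WW \<theta> t + app (EE (- Phi \<theta> t)) ((cos (ph (\<theta> t)) - Phid \<theta> t) *\<^sub>R Mop (cent (\<theta> t)) + RR (\<theta> t))))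
     (at t within S)"
proof -
  have du: "((\<lambda>t. cent (\<theta> t)) has_vector_derivative cent (ff (\<theta> t))) (at t within S)"
    by (rule bounded_linear.has_vector_derivative[OF bl_cent sol])
  have dp: "((\<lambda>t. ph (\<theta> t)) has_vector_derivative ph (ff (\<theta> t))) (at t within S)"
    by (rule bounded_linear.has_vector_derivative[OF bl_ph sol])
  have dP: "(Phi \<theta> has_vector_derivative Phid \<theta> t) (at t within S)"
  proof -
    have "((hh \<circ> (\<lambda>t. ph (\<theta> t))) has_vector_derivative (ph (ff (\<theta> t)) * (cos (ph (\<theta> t)) / (wb - ab * sin (ph (\<theta> t))))))
        (at t within S)"
      by (rule field_vector_diff_chain_within[OF dp hh_deriv])
    thus ?thesis by (simp add: Phi_def[abs_def] Phid_def o_def)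
  qed
  have dmP: "((\<lambda>t. - Phi \<theta> t) has_vector_derivative - Phid \<theta> t) (at t within S)"
    by (rule has_vector_derivative_minus[OF dP])
  have dE: "((\<lambda>t. EE (- Phi \<theta> t)) has_vector_derivative ((- Phid \<theta> t) *\<^sub>R (EE (- Phi \<theta> t) * MM))) (at t within S)"
  proof -
    have "(((\<lambda>s. exp (s *\<^sub>R MM)) \<circ> (\<lambda>t. - Phi \<theta> t)) has_vector_derivative
        ((- Phid \<theta> t) *\<^sub>R (exp ((- Phi \<theta> t) *\<^sub>R MM) * MM))) (at t within S)"
      by (rule vector_diff_chain_within[OF dmP exp_scaleR_has_vector_derivative_right])
    thus ?thesis by (simp add: EE_def[abs_def] o_def)
  qed
  have dW: "(WW \<theta> has_vector_derivative
      (app (EE (- Phi \<theta> t)) (cent (ff (\<theta> t))) + app ((- Phid \<theta> t) *\<^sub>R (EE (- Phi \<theta> t) * MM)) (cent (\<theta> t))))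
      (at t within S)"
    unfolding WW_def[abs_def]
    by (rule bounded_bilinear.has_vector_derivative[OF bb_app dE du])
  show ?thesis
  proof (rule has_vector_derivative_eq_rhs[OF dW])
    interpret B: bounded_bilinear app by (rule bb_app)
    have "cent (ff (\<theta> t)) = \<alpha> *\<^sub>R cent (\<theta> t) + cos (ph (\<theta> t)) *\<^sub>R Mop (cent (\<theta> t)) + RR (\<theta> t)"
      by (simp add: RR_def)
    thus "app (EE (- Phi \<theta> t)) (cent (ff (\<theta> t))) + app ((- Phid \<theta> t) *\<^sub>R (EE (- Phi \<theta> t) * MM)) (cent (\<theta> t)) =
      \<alpha> *\<^sub>R WW \<theta> t + app (EE (- Phi \<theta> t)) ((cos (ph (\<theta> t)) - Phid \<theta> t) *\<^sub>R Mop (cent (\<theta> t)) + RR (\<theta> t))"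
      by (simp add: WW_def B.add_right B.diff_right B.minus_left B.scaleR_right B.scaleR_left EE_comm algebra_simps)
  qed
qed

end


context kur begin

lemma u_le_W: "norm (cent (\<theta> t)) \<le> BB * norm (WW \<theta> t)"
proof -
  have "cent (\<theta> t) = app (EE (Phi \<theta> t)) (WW \<theta> t)" by (simp add: WW_def EE_inv)
  also have "norm \<dots> \<le> norm (EE (Phi \<theta> t)) * norm (WW \<theta> t)" by (rule norm_app)
  also have "\<dots> \<le> BB * norm (WW \<theta> t)"
    by (rule mult_right_mono[OF EE_bound]) (auto simp: Phi_def hh_bound)
  finally show ?thesis .
qed

lemma W_le_u: "norm (WW \<theta> t) \<le> BB * norm (cent (\<theta> t))"
proof -
  have "norm (WW \<theta> t) \<le> norm (EE (- Phi \<theta> t)) * norm (cent (\<theta> t))" unfolding WW_def by (rule norm_app)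
  also have "\<dots> \<le> BB * norm (cent (\<theta> t))"
    by (rule mult_right_mono[OF EE_bound]) (auto simp: Phi_def hh_bound)
  finally show ?thesis .
qed

definition "K3 = 8 * AA * norm MM / (wb - ab) + K1"
definition "K4 = BB ^ 3 * K3"

lemma K3_nonneg: "K3 \<ge> 0" using AA_nonneg K1_nonneg wb_gt by (simp add: K3_def)

lemma rem_bound:
  assumes "norm (cent x) \<le> 1"
  shows "norm ((cos (ph x) - ph (ff x) * (cos (ph x) / (wb - ab * sin (ph x)))) *\<^sub>R Mop (cent x) + RR x)
     \<le> K3 * (norm (cent x))\<^sup>2"
proof -
  let ?u = "norm (cent x)" and ?D = "wb - ab * sin (ph x)" and ?r = "ph (ff x) - (wb - ab * sin (ph x))"
  have D: "?D \<ge> wb - ab" "?D > 0" using D_bounds(1) D_pos by auto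
  have r: "\<bar>?r\<bar> \<le> 8 * AA * ?u\<^sup>2" using rho_bound[of x] by (simp add: wb_def ab_def)
  have "cos (ph x) - ph (ff x) * (cos (ph x) / ?D) = - cos (ph x) * ?r / ?D"
    using D by (simp add: field_simps)
  hence c: "\<bar>cos (ph x) - ph (ff x) * (cos (ph x) / ?D)\<bar> \<le> 8 * AA * ?u\<^sup>2 / (wb - ab)"
  proof -
    assume e: "cos (ph x) - ph (ff x) * (cos (ph x) / ?D) = - cos (ph x) * ?r / ?D"
    have "\<bar>- cos (ph x) * ?r / ?D\<bar> = \<bar>cos (ph x)\<bar> * \<bar>?r\<bar> / ?D" using D by (simp add: abs_mult)
    also have "\<dots> \<le> 1 * \<bar>?r\<bar> / ?D" using D by (intro divide_right_mono mult_right_mono) auto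
    also have "\<dots> \<le> \<bar>?r\<bar> / (wb - ab)" using D wb_gt by (simp add: frac_le)
    also have "\<dots> \<le> 8 * AA * ?u\<^sup>2 / (wb - ab)" using r wb_gt by (simp add: divide_right_mono)
    finally show ?thesis using e by simp
  qed
  have m: "norm (Mop (cent x)) \<le> norm MM * ?u" using norm_app[of MM "cent x"] by (simp add: app_MM)
  have "norm ((cos (ph x) - ph (ff x) * (cos (ph x) / ?D)) *\<^sub>R Mop (cent x) + RR x)
      \<le> \<bar>cos (ph x) - ph (ff x) * (cos (ph x) / ?D)\<bar> * norm (Mop (cent x)) + norm (RR x)"
    by (rule order_trans[OF norm_triangle_ineq]) simp
  also have "\<dots> \<le> (8 * AA * ?u\<^sup>2 / (wb - ab)) * (norm MM * ?u) + K1 * ?u\<^sup>2"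
    using R_bound[of x] AA_nonneg wb_gt unfolding RR_def[symmetric]
    by (intro add_mono mult_mono c m) auto
  also have "\<dots> \<le> (8 * AA * ?u\<^sup>2 / (wb - ab)) * (norm MM * 1) + K1 * ?u\<^sup>2"
    using assms AA_nonneg wb_gt K1_nonneg by (intro add_mono mult_left_mono) auto
  also have "\<dots> = K3 * ?u\<^sup>2" by (simp add: K3_def algebra_simps)
  finally show ?thesis .
qed

lemma Wdot_bound:
  assumes "norm (WW \<theta> t) \<le> 1 / BB"
  shows "norm (app (EE (- Phi \<theta> t)) ((cos (ph (\<theta> t)) - Phid \<theta> t) *\<^sub>R Mop (cent (\<theta> t)) + RR (\<theta> t)))
     \<le> K4 * (norm (WW \<theta> t))\<^sup>2"
proof -
  let ?u = "norm (cent (\<theta> t))" and ?w = "norm (WW \<theta> t)"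
  have B: "BB \<ge> 1" by (rule BB_ge1)
  have "BB * ?w \<le> BB * (1 / BB)" by (rule mult_left_mono[OF assms]) (use B in auto)
  hence u1: "?u \<le> 1" using u_le_W[of \<theta> t] B by simp
  have Eb: "norm (EE (- Phi \<theta> t)) \<le> BB" by (rule EE_bound) (simp add: Phi_def hh_bound)
  have Rb: "norm ((cos (ph (\<theta> t)) - Phid \<theta> t) *\<^sub>R Mop (cent (\<theta> t)) + RR (\<theta> t)) \<le> K3 * ?u\<^sup>2"
    using rem_bound[OF u1] by (simp add: Phid_def)
  have "norm (app (EE (- Phi \<theta> t)) ((cos (ph (\<theta> t)) - Phid \<theta> t) *\<^sub>R Mop (cent (\<theta> t)) + RR (\<theta> t)))
      \<le> norm (EE (- Phi \<theta> t)) * norm ((cos (ph (\<theta> t)) - Phid \<theta> t) *\<^sub>R Mop (cent (\<theta> t)) + RR (\<theta> t))"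
    by (rule norm_app)
  also have "\<dots> \<le> BB * (K3 * ?u\<^sup>2)"
    by (rule mult_mono[OF Eb Rb]) (use B in auto)
  also have "\<dots> \<le> BB * (K3 * (BB * ?w)\<^sup>2)"
    using u_le_W[of \<theta> t] B K3_nonneg
    by (intro mult_left_mono power_mono) auto
  also have "\<dots> = K4 * ?w\<^sup>2" by (simp add: K4_def power2_eq_square power3_eq_cube)
  finally show ?thesis .
qed

definition "eps = min (- \<alpha> / (2 * K4 + 1)) (1 / BB)"

lemma K4_nonneg: "K4 \<ge> 0" using K3_nonneg BB_ge1 by (simp add: K4_def)
lemma eps_pos: "eps > 0" using aneg K4_nonneg BB_ge1 by (simp add: eps_def divide_neg_pos)
lemma K4_eps: "K4 * eps \<le> - \<alpha> / 2"
proof -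
  have "K4 * eps \<le> K4 * (- \<alpha> / (2 * K4 + 1))" using K4_nonneg by (intro mult_left_mono) (auto simp: eps_def)
  also have "\<dots> \<le> - \<alpha> / 2" using K4_nonneg aneg by (simp add: field_simps)
  finally show ?thesis .
qed

lemma g_decr:
  assumes sol: "\<And>t. t \<ge> 0 \<Longrightarrow> (\<theta> has_vector_derivative ff (\<theta> t)) (at t within {0..})"
    and ab: "0 \<le> t0" "t0 \<le> t1" and small: "\<And>s. t0 < s \<Longrightarrow> s < t1 \<Longrightarrow> norm (WW \<theta> s) \<le> eps"
  shows "exp (- \<alpha> * t1) * (norm (WW \<theta> t1))\<^sup>2 \<le> exp (- \<alpha> * t0) * (norm (WW \<theta> t0))\<^sup>2"
proof -
  define W' where "W' s = \<alpha> *\<^sub>R WW \<theta> s + app (EE (- Phi \<theta> s)) ((cos (ph (\<theta> s)) - Phid \<theta> s) *\<^sub>R Mop (cent (\<theta> s)) + RR (\<theta> s))" for s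
  have dW0: "(WW \<theta> has_vector_derivative W' s) (at s within {0..})" if "s \<ge> 0" for s
    unfolding W'_def by (rule W_deriv[OF sol[OF that]])
  have cont: "continuous_on {0..} (WW \<theta>)"
    by (rule continuous_on_vector_derivative) (use dW0 in auto)
  let ?g = "\<lambda>s. exp (- \<alpha> * s) * (inner (WW \<theta> s) (WW \<theta> s))"
  have "?g t0 \<ge> ?g t1"
  proof (rule DERIV_nonpos_imp_decreasing_open[OF ab(2)])
    show "continuous_on {t0..t1} ?g"
      by (intro continuous_intros continuous_on_subset[OF cont]) (use ab in auto)
  next
    fix s assume s: "t0 < s" "s < t1"
    have s0: "s > 0" using s ab by auto
    have "(WW \<theta> has_vector_derivative W' s) (at s within {0<..})"
      by (rule has_vector_derivative_within_subset[OF dW0]) (use s0 in auto)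
    hence dW: "(WW \<theta> has_vector_derivative W' s) (at s)"
      using at_within_open[of s "{0<..}"] s0 by simp
    have di: "((\<lambda>s. inner (WW \<theta> s) (WW \<theta> s)) has_real_derivative
        (inner (WW \<theta> s) (W' s) + inner (W' s) (WW \<theta> s))) (at s)"
      unfolding has_real_derivative_iff_has_vector_derivative
      using bounded_bilinear.has_vector_derivative[OF bounded_bilinear_inner dW dW] by simp
    have de: "((\<lambda>s. exp (- \<alpha> * s)) has_real_derivative (exp (- \<alpha> * s) * (- \<alpha>))) (at s)"
      by (rule DERIV_fun_exp) (auto intro!: derivative_eq_intros)
    have dg: "(?g has_real_derivative (exp (- \<alpha> * s) * (inner (WW \<theta> s) (W' s) + inner (W' s) (WW \<theta> s))
        + (- \<alpha>) * exp (- \<alpha> * s) * inner (WW \<theta> s) (WW \<theta> s))) (at s)"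
      using DERIV_mult[OF de di] by (simp add: algebra_simps)
    moreover have "exp (- \<alpha> * s) * (inner (WW \<theta> s) (W' s) + inner (W' s) (WW \<theta> s))
        + (- \<alpha>) * exp (- \<alpha> * s) * inner (WW \<theta> s) (WW \<theta> s) \<le> 0"
    proof -
      let ?w = "norm (WW \<theta> s)"
      let ?X = "app (EE (- Phi \<theta> s)) ((cos (ph (\<theta> s)) - Phid \<theta> s) *\<^sub>R Mop (cent (\<theta> s)) + RR (\<theta> s))"
      have ws: "?w \<le> eps" using small s by auto
      have X: "norm ?X \<le> K4 * ?w\<^sup>2"
        by (rule Wdot_bound) (use ws in \<open>auto simp: eps_def\<close>)
      have "inner (WW \<theta> s) ?X \<le> ?w * norm ?X" by (rule norm_cauchy_schwarz)
      also have "\<dots> \<le> ?w * (K4 * ?w\<^sup>2)" by (rule mult_left_mono[OF X]) simp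
      also have "\<dots> = (K4 * ?w) * ?w\<^sup>2" by (simp add: power2_eq_square)
      also have "\<dots> \<le> (- \<alpha> / 2) * ?w\<^sup>2"
      proof (rule mult_right_mono)
        have "K4 * ?w \<le> K4 * eps" by (rule mult_left_mono[OF ws K4_nonneg])
        thus "K4 * ?w \<le> - \<alpha> / 2" using K4_eps by linarith
      qed simp
      finally have iX: "inner (WW \<theta> s) ?X \<le> (- \<alpha> / 2) * ?w\<^sup>2" .
      have "inner (WW \<theta> s) (W' s) + inner (W' s) (WW \<theta> s) = 2 * (\<alpha> * ?w\<^sup>2 + inner (WW \<theta> s) ?X)"
        by (simp add: W'_def inner_add_right inner_add_left inner_commute power2_norm_eq_inner)
      hence "inner (WW \<theta> s) (W' s) + inner (W' s) (WW \<theta> s) + (- \<alpha>) * inner (WW \<theta> s) (WW \<theta> s) \<le> 0"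
        using iX by (simp add: power2_norm_eq_inner)
      hence "exp (- \<alpha> * s) * (inner (WW \<theta> s) (W' s) + inner (W' s) (WW \<theta> s) + (- \<alpha>) * inner (WW \<theta> s) (WW \<theta> s)) \<le> 0"
        by (simp add: mult_nonneg_nonpos)
      thus ?thesis by (simp add: algebra_simps)
    qed
    ultimately show "\<exists>y. (?g has_real_derivative y) (at s) \<and> y \<le> 0" by blast
  qed
  thus ?thesis by (simp add: power2_norm_eq_inner)
qed

lemma W_decay:
  assumes sol: "\<And>t. t \<ge> 0 \<Longrightarrow> (\<theta> has_vector_derivative ff (\<theta> t)) (at t within {0..})"
    and small: "norm (WW \<theta> 0) < eps"
  shows "t \<ge> 0 \<Longrightarrow> (norm (WW \<theta> t))\<^sup>2 \<le> exp (\<alpha> * t) * (norm (WW \<theta> 0))\<^sup>2"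
proof -
  have dW0: "\<exists>D. (WW \<theta> has_vector_derivative D) (at s within {0..})" if "s \<ge> 0" for s
    using W_deriv[OF sol[OF that]] by blast
  have cont: "continuous_on {0..} (WW \<theta>)"
    unfolding continuous_on_eq_continuous_within
    using dW0 has_vector_derivative_continuous by blast
  have allsmall: "norm (WW \<theta> t) < eps" if t: "t \<ge> 0" for t
  proof (rule ccontr)
    assume "\<not> norm (WW \<theta> t) < eps"
    hence nt: "norm (WW \<theta> t) \<ge> eps" by simp
    define T where "T = {0..t} \<inter> (\<lambda>s. norm (WW \<theta> s)) -` {eps..}"
    have cl: "closed T" unfolding T_def
      by (rule continuous_closed_preimage) (auto intro!: continuous_intros continuous_on_subset[OF cont])
    have tT: "t \<in> T" using t nt by (simp add: T_def)
    have bdd: "bdd_below T" by (auto simp: T_def bdd_below_def)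
    define t1 where "t1 = Inf T"
    have t1T: "t1 \<in> T" unfolding t1_def using closed_contains_Inf[OF _ bdd cl] tT by blast
    have t1ge: "t1 \<ge> 0" and nt1: "norm (WW \<theta> t1) \<ge> eps" using t1T by (auto simp: T_def)
    have t1ne: "t1 \<noteq> 0" using nt1 small by auto
    have below: "norm (WW \<theta> s) \<le> eps" if "0 < s" "s < t1" for s
    proof (rule ccontr)
      assume "\<not> norm (WW \<theta> s) \<le> eps"
      hence "s \<in> T" using that t1T by (auto simp: T_def)
      hence "t1 \<le> s" unfolding t1_def by (rule cInf_lower[OF _ bdd])
      thus False using that by simp
    qed
    have "exp (- \<alpha> * t1) * (norm (WW \<theta> t1))\<^sup>2 \<le> exp (- \<alpha> * 0) * (norm (WW \<theta> 0))\<^sup>2"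
      by (rule g_decr[OF sol]) (use t1ge below in auto)
    hence "(norm (WW \<theta> t1))\<^sup>2 \<le> exp (\<alpha> * t1) * (norm (WW \<theta> 0))\<^sup>2"
      by (simp add: exp_minus field_simps)
    also have "\<dots> \<le> 1 * (norm (WW \<theta> 0))\<^sup>2"
      using aneg t1ge by (intro mult_right_mono) (auto simp: mult_nonpos_nonneg)
    also have "\<dots> < eps\<^sup>2" using small by (simp add: power_strict_mono)
    also have "\<dots> \<le> (norm (WW \<theta> t1))\<^sup>2" using nt1 eps_pos by (simp add: power_mono)
    finally show False by simp
  qed
  assume t: "t \<ge> 0"
  have "exp (- \<alpha> * t) * (norm (WW \<theta> t))\<^sup>2 \<le> exp (- \<alpha> * 0) * (norm (WW \<theta> 0))\<^sup>2"
    by (rule g_decr[OF sol]) (use t allsmall in \<open>auto intro: less_imp_le\<close>)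
  thus ?thesis by (simp add: exp_minus field_simps)
qed

end


context kur begin

lemma stab: "\<exists>\<delta>>0. \<exists>c>0. \<exists>lam>0. \<forall>\<theta>. (\<forall>t\<ge>0. (\<theta> has_vector_derivative ff (\<theta> t)) (at t within {0..}))
   \<and> norm (cent (\<theta> 0)) < \<delta> \<longrightarrow> (\<forall>t\<ge>0. norm (cent (\<theta> t)) \<le> c * exp (- lam * t) * norm (cent (\<theta> 0)))"
proof (intro exI conjI allI impI)
  show "eps / BB > 0" using eps_pos BB_ge1 by simp
  show "BB\<^sup>2 > 0" using BB_ge1 by simp
  show "- \<alpha> / 2 > 0" using aneg by simp
  fix \<theta> :: "real \<Rightarrow> real^'n" and t :: real
  assume h: "(\<forall>t\<ge>0. (\<theta> has_vector_derivative ff (\<theta> t)) (at t within {0..})) \<and> norm (cent (\<theta> 0)) < eps / BB"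
    and t: "0 \<le> t"
  have sol: "\<And>t. t \<ge> 0 \<Longrightarrow> (\<theta> has_vector_derivative ff (\<theta> t)) (at t within {0..})" using h by blast
  have h2: "norm (cent (\<theta> 0)) < eps / BB" using h by blast
  have B: "BB \<ge> 1" by (rule BB_ge1)
  have "norm (WW \<theta> 0) \<le> BB * norm (cent (\<theta> 0))" by (rule W_le_u)
  also have "\<dots> < BB * (eps / BB)" by (rule mult_strict_left_mono[OF h2]) (use B in linarith)
  also have "\<dots> = eps" using B by simp
  finally have small: "norm (WW \<theta> 0) < eps" .
  have dec: "(norm (WW \<theta> t))\<^sup>2 \<le> exp (\<alpha> * t) * (norm (WW \<theta> 0))\<^sup>2"
    by (rule W_decay[OF sol small t])
  have ee: "exp (\<alpha> * t) = (exp (\<alpha> * t / 2))\<^sup>2"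
    unfolding power2_eq_square exp_add[symmetric] by simp
  have "exp (\<alpha> * t) * (norm (WW \<theta> 0))\<^sup>2 = (exp (\<alpha> * t / 2) * norm (WW \<theta> 0))\<^sup>2"
    unfolding ee power_mult_distrib ..
  hence dec2: "(norm (WW \<theta> t))\<^sup>2 \<le> (exp (\<alpha> * t / 2) * norm (WW \<theta> 0))\<^sup>2" using dec by simp
  have wt: "norm (WW \<theta> t) \<le> exp (\<alpha> * t / 2) * norm (WW \<theta> 0)"
    by (rule power2_le_imp_le[OF dec2]) simp
  have "norm (cent (\<theta> t)) \<le> BB * norm (WW \<theta> t)" by (rule u_le_W)
  also have "\<dots> \<le> BB * (exp (\<alpha> * t / 2) * norm (WW \<theta> 0))"
    by (rule mult_left_mono[OF wt]) (use B in linarith)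
  also have "\<dots> \<le> BB * (exp (\<alpha> * t / 2) * (BB * norm (cent (\<theta> 0))))"
    by (intro mult_left_mono W_le_u) (use B in auto)
  also have "\<dots> = BB\<^sup>2 * exp (- (- \<alpha> / 2) * t) * norm (cent (\<theta> 0))"
    by (simp add: power2_eq_square mult_ac)
  finally show "norm (cent (\<theta> t)) \<le> BB\<^sup>2 * exp (- (- \<alpha> / 2) * t) * norm (cent (\<theta> 0))" .
qed

lemma norm_cent_le: "norm (cent v) \<le> norm v"
proof -
  define c where "c = v - cent v"
  have c_eq: "c$i = mnf (($) v) (cl i)" for i by (simp add: c_def cent_def)
  have "inner (cent v) c = (\<Sum>i\<in>UNIV. (cent v)$i * c$i)" by (simp add: inner_vec_def)
  also have "\<dots> = (\<Sum>i\<in>P1. (cent v)$i * c$i) + (\<Sum>i\<in>P2. (cent v)$i * c$i)"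
    using sum.union_disjoint[of P1 P2 "\<lambda>i. (cent v)$i * c$i"] disj cover by simp
  also have "(\<Sum>i\<in>P1. (cent v)$i * c$i) = (\<Sum>i\<in>P1. (cent v)$i) * mnf (($) v) P1"
    by (simp add: c_eq cl_def sum_distrib_right)
  also have "(\<Sum>i\<in>P2. (cent v)$i * c$i) = (\<Sum>i\<in>P2. (cent v)$i) * mnf (($) v) P2"
    by (simp add: c_eq cl_def notP1 sum_distrib_right)
  finally have "inner (cent v) c = 0" using cent_sum[of P1 v] cent_sum[of P2 v] by simp
  hence "(norm (cent v + c))\<^sup>2 = (norm (cent v))\<^sup>2 + (norm c)\<^sup>2" by (rule norm_add_Pythagorean[unfolded orthogonal_def])
  hence "(norm (cent v))\<^sup>2 \<le> (norm v)\<^sup>2" by (simp add: c_def)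
  thus ?thesis by (simp add: power2_le_iff_abs_le)
qed

lemma cent_const: "(\<And>i j. j \<in> cl i \<Longrightarrow> v$j = v$i) \<Longrightarrow> cent v = 0"
proof -
  assume h: "\<And>i j. j \<in> cl i \<Longrightarrow> v$j = v$i"
  have "mnf (($) v) (cl i) = v$i" for i
  proof -
    have ne: "cl i \<noteq> {}" using in_cl by auto
    have "(\<Sum>j\<in>cl i. v$j) = real (card (cl i)) * v$i" using h by simp
    thus ?thesis using ne by (simp add: mnf_def)
  qed
  thus ?thesis by (simp add: cent_def vec_eq_iff)
qed

lemma ff_shift: "(\<And>i. \<exists>m::int. kv$i = 2 * pi * of_int m) \<Longrightarrow> ff (x - kv) = ff x"
proof -
  assume h: "\<And>i. \<exists>m::int. kv$i = 2 * pi * of_int m"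
  have "sin ((x - kv)$j - (x - kv)$i) = sin (x$j - x$i)" for i j
  proof -
    obtain mi mj :: int where "kv$i = 2 * pi * of_int mi" "kv$j = 2 * pi * of_int mj" using h by metis
    hence e: "(x - kv)$j - (x - kv)$i = (x$j - x$i) + (2 * pi) * of_int (mi - mj)" by (simp add: algebra_simps)
    show ?thesis unfolding e sin_add cos_int_2pin sin_int_2pin by simp
  qed
  thus ?thesis by (simp add: kuramoto_def)
qed

lemma half_way_lt: "(x::real) < d \<Longrightarrow> x + (d - x) / 2 < d" by (simp add: field_simps)

lemma cl_eq: "j \<in> cl i \<Longrightarrow> cl j = cl i"
  using disj by (auto simp: cl_def)

lemma final: "locally_exp_stable (kuramoto a om) (sync_manifold {P1, P2})"
proof -
  let ?S = "sync_manifold {P1, P2}"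
  obtain \<delta> c lam where dp: "\<delta> > 0" and cp: "c > 0" and lp: "lam > 0" and
    st: "\<And>\<theta>. (\<forall>t\<ge>0. (\<theta> has_vector_derivative ff (\<theta> t)) (at t within {0..})) \<and> norm (cent (\<theta> 0)) < \<delta>
      \<Longrightarrow> (\<forall>t\<ge>0. norm (cent (\<theta> t)) \<le> c * exp (- lam * t) * norm (cent (\<theta> 0)))"
    using stab by blast
  have S0: "0 \<in> ?S" by (auto simp: sync_manifold_def intro: exI[where x=0])
  obtain i1 i2 where i1: "i1 \<in> P1" and i2: "i2 \<in> P2" using ne1 ne2 by blast
  define bp where "bp i = (if i \<in> P1 then i1 else i2)" for i
  have bp_cl: "bp i \<in> cl i" for i using i1 i2 by (simp add: bp_def cl_def)
  have bp_eq: "j \<in> cl i \<Longrightarrow> bp j = bp i" for i j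
    using disj by (auto simp: bp_def cl_def)
  show ?thesis unfolding locally_exp_stable_def
  proof (intro exI conjI allI impI)
    show "\<delta> > 0" "c > 0" "lam > 0" by (fact dp cp lp)+
    fix \<theta> :: "real \<Rightarrow> real^'n" and t :: real
    assume h: "(\<forall>t\<ge>0. (\<theta> has_vector_derivative ff (\<theta> t)) (at t within {0..})) \<and> infdist (\<theta> 0) ?S < \<delta>"
      and t: "0 \<le> t"
    let ?C = "c * exp (- lam * t)"
    have Cp: "?C > 0" using cp by simp
    let ?d0 = "infdist (\<theta> 0) ?S"
    show "infdist (\<theta> t) ?S \<le> ?C * ?d0"
    proof (rule field_le_epsilon)
      fix e :: real assume e: "e > 0"
      define \<eta> where "\<eta> = min (e / ?C) ((\<delta> - ?d0) / 2)"
      have \<eta>p: "\<eta> > 0" using e Cp h by (simp add: \<eta>_def)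
      have "?d0 < ?d0 + \<eta>" using \<eta>p by simp
      moreover have "?S \<noteq> {}" using S0 by blast
      hence "(INF x\<in>?S. dist (\<theta> 0) x) = ?d0" by (rule infdist_notempty[symmetric])
      ultimately have "(INF x\<in>?S. dist (\<theta> 0) x) < ?d0 + \<eta>" by simp
      then obtain s where sS: "s \<in> ?S" and ds: "dist (\<theta> 0) s < ?d0 + \<eta>"
        using S0 by (subst (asm) cINF_less_iff) (auto intro: bdd_belowI[where m=0])
      have "\<exists>m::int. s$i - s$(bp i) = 2 * pi * of_int m" for i
      proof -
        have "cl i \<in> {P1, P2}" using cl_cases[of i] by auto
        with sS have "\<forall>i'\<in>cl i. \<forall>j\<in>cl i. \<exists>k::int. s$j - s$i' = 2 * pi * of_int k"
          unfolding sync_manifold_def by blast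
        thus ?thesis using bp_cl[of i] in_cl[of i] by blast
      qed
      define kv :: "real^'n" where "kv = (\<chi> i. s$i - s$(bp i))"
      have kvi: "\<exists>m::int. kv$i = 2 * pi * of_int m" for i
        using \<open>\<And>i. \<exists>m::int. s$i - s$(bp i) = 2 * pi * of_int m\<close> by (simp add: kv_def)
      define \<theta>' where "\<theta>' t = \<theta> t - kv" for t
      have sol': "\<forall>t\<ge>0. (\<theta>' has_vector_derivative ff (\<theta>' t)) (at t within {0..})"
      proof (intro allI impI)
        fix t :: real assume "t \<ge> 0"
        hence "(\<theta> has_vector_derivative ff (\<theta> t)) (at t within {0..})" using h by blast
        hence "((\<lambda>t. \<theta> t - kv) has_vector_derivative ff (\<theta> t)) (at t within {0..})"
          by (simp add: has_vector_derivative_diff_const)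
        thus "(\<theta>' has_vector_derivative ff (\<theta>' t)) (at t within {0..})"
          by (simp add: \<theta>'_def[abs_def] ff_shift[OF kvi])
      qed
      have c0: "cent (s - kv) = 0"
        by (rule cent_const) (simp add: kv_def bp_eq)
      have "cent (\<theta>' 0) = cent (\<theta> 0 - s) + cent (s - kv)"
        using linear_add[OF bounded_linear.linear[OF bl_cent], of "\<theta> 0 - s" "s - kv"] by (simp add: \<theta>'_def)
      hence "norm (cent (\<theta>' 0)) \<le> dist (\<theta> 0) s" using norm_cent_le[of "\<theta> 0 - s"] c0 by (simp add: dist_norm)
      hence n0: "norm (cent (\<theta>' 0)) < ?d0 + \<eta>" using ds by linarith
      have "\<eta> \<le> (\<delta> - ?d0) / 2" unfolding \<eta>_def by (rule min.cobounded2)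
      hence "?d0 + \<eta> \<le> ?d0 + (\<delta> - ?d0) / 2" by linarith
      hence "norm (cent (\<theta>' 0)) < ?d0 + (\<delta> - ?d0) / 2" using n0 by linarith
      also have "\<dots> < \<delta>" by (rule half_way_lt[OF h[THEN conjunct2]])
      finally have "norm (cent (\<theta>' 0)) < \<delta>" .
      hence dec: "norm (cent (\<theta>' t)) \<le> ?C * norm (cent (\<theta>' 0))" using st[of \<theta>'] sol' t by blast
      define p where "p = \<theta> t - cent (\<theta>' t)"
      have pS: "p \<in> ?S"
      proof -
        have pe: "p$i = kv$i + mnf (($) (\<theta>' t)) (cl i)" for i by (simp add: p_def cent_def \<theta>'_def)
        have "\<exists>k::int. p$j - p$i = 2 * pi * of_int k" if "P \<in> {P1, P2}" "i \<in> P" "j \<in> P" for P i j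
        proof -
          have "cl i = P" "cl j = P" using that disj by (auto simp: cl_def)
          hence "p$j - p$i = kv$j - kv$i" by (simp add: pe)
          moreover obtain mi mj :: int where "kv$i = 2 * pi * of_int mi" "kv$j = 2 * pi * of_int mj"
            using kvi by metis
          ultimately have "p$j - p$i = 2 * pi * of_int (mj - mi)" by (simp add: algebra_simps)
          thus ?thesis by blast
        qed
        thus ?thesis unfolding sync_manifold_def by blast
      qed
      have "infdist (\<theta> t) ?S \<le> dist (\<theta> t) p" by (rule infdist_le[OF pS])
      also have "\<dots> = norm (cent (\<theta>' t))" by (simp add: p_def dist_norm)
      also have "\<dots> \<le> ?C * norm (cent (\<theta>' 0))" by (rule dec)
      also have "\<dots> \<le> ?C * (?d0 + \<eta>)" using n0 Cp by (intro mult_left_mono) auto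
      also have "\<dots> = ?C * ?d0 + ?C * \<eta>" by (simp add: algebra_simps)
      also have "?C * \<eta> \<le> ?C * (e / ?C)" using Cp unfolding \<eta>_def by (intro mult_left_mono min.cobounded1) auto
      also have "?C * (e / ?C) = e" using Cp cp by simp
      finally show "infdist (\<theta> t) ?S \<le> ?C * ?d0 + e" by simp
    qed
  qed
qed

end



lemma conn_const:
  assumes "connected_on P E" "i \<in> P" "j \<in> P"
    and "\<And>p q. (p, q) \<in> E \<Longrightarrow> p \<in> P \<Longrightarrow> q \<in> P \<Longrightarrow> f p = f q"
  shows "f i = f j"
proof -
  have "(i, j) \<in> ((E \<union> E\<inverse>) \<inter> (P \<times> P))\<^sup>*" using assms(1-3) by (simp add: connected_on_def)
  thus ?thesis
  proof (induction rule: rtrancl_induct)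
    case (step y z)
    thus ?case using assms(4)[of y z] assms(4)[of z y] by auto
  qed simp
qed

lemma path_diff_lin:
  fixes x :: "real^('n::finite \<times> 'n)"
  assumes conn: "connected_on P E" and sub: "E \<subseteq> EE"
    and hx: "\<And>p q. (p, q) \<in> EE \<Longrightarrow> x $ (p, q) = t * (d q - d p)"
    and u: "u \<in> P" and w: "w \<in> P"
  shows "path_diff EE x u w = t * (d w - d u)"
proof -
  let ?Q = "\<lambda>r. \<exists>\<phi>::'n \<Rightarrow> real. (\<forall>(p, q)\<in>EE. \<phi> q - \<phi> p = x $ (p, q)) \<and> r = \<phi> w - \<phi> u"
  have ex: "\<exists>r. ?Q r"
    by (rule exI[where x="t * d w - t * d u"], rule exI[where x="\<lambda>z. t * d z"]) (auto simp: hx algebra_simps)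
  obtain \<phi> where \<phi>: "\<forall>(p, q)\<in>EE. \<phi> q - \<phi> p = x $ (p, q)" and r: "path_diff EE x u w = \<phi> w - \<phi> u"
    using someI_ex[OF ex] unfolding path_diff_def by blast
  have "(\<lambda>z. \<phi> z - t * d z) u = (\<lambda>z. \<phi> z - t * d z) w"
  proof (rule conn_const[OF conn u w])
    fix p q assume "(p, q) \<in> E"
    hence "(p, q) \<in> EE" using sub by blast
    hence "\<phi> q - \<phi> p = t * (d q - d p)" using \<phi> hx by auto
    thus "\<phi> p - t * d p = \<phi> q - t * d q" by (simp add: algebra_simps)
  qed
  thus ?thesis using r by (simp add: algebra_simps)
qed

lemma lap_from_jac:
  fixes a :: "'n::finite \<Rightarrow> 'n \<Rightarrow> real" and G :: "real^('n \<times> 'n) \<Rightarrow> real^('n \<times> 'n)"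
  assumes sym: "\<And>i j. a i j = a j i"
    and conn: "connected_on P E" and sub: "E \<subseteq> EE" and EP: "\<And>i j. (i, j) \<in> E \<Longrightarrow> i \<in> P \<and> j \<in> P"
    and hG: "\<And>x i j. (i, j) \<in> E \<Longrightarrow> G x $ (i, j) =
        (\<Sum>z\<in>P. a j z * sin (path_diff EE x j z) - a i z * sin (path_diff EE x i z))"
    and hJ: "(G has_derivative J) (at 0)"
    and Jv: "\<And>v. (\<forall>e. e \<notin> EE \<longrightarrow> v $ e = 0) \<Longrightarrow> J v = \<alpha> *\<^sub>R v"
    and Pne: "P \<noteq> {}"
    and ds: "(\<Sum>z\<in>P. d z) = 0" and j: "j \<in> P"
  shows "(\<Sum>z\<in>P. a j z * (d z - d j)) = \<alpha> * d j"
proof -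
  define v :: "real^('n \<times> 'n)" where "v = (\<chi> e. if e \<in> EE then d (snd e) - d (fst e) else 0)"
  have vsupp: "\<forall>e. e \<notin> EE \<longrightarrow> v $ e = 0" by (simp add: v_def)
  have Jv': "J v = \<alpha> *\<^sub>R v" using Jv vsupp by blast
  have lin: "linear J" using hJ has_derivative_linear by blast
  define h where "h u = (\<Sum>z\<in>P. a u z * (d z - d u)) - \<alpha> * d u" for u
  have edge: "h p = h q" if pq: "(p, q) \<in> E" for p q
  proof -
    have pqP: "p \<in> P" "q \<in> P" using EP[OF pq] by auto
    have pqE: "(p, q) \<in> EE" using pq sub by blast
    have dl: "((\<lambda>t. t *\<^sub>R v) has_derivative (\<lambda>t. t *\<^sub>R v)) (at 0)"
      by (intro derivative_eq_intros) auto
    have "((\<lambda>t. G (t *\<^sub>R v)) has_derivative (\<lambda>t. J (t *\<^sub>R v))) (at 0)"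
      using has_derivative_compose[OF dl, of G J] hJ by simp
    hence "((\<lambda>t. G (t *\<^sub>R v) $ (p, q)) has_derivative (\<lambda>t. J (t *\<^sub>R v) $ (p, q))) (at 0)"
      by (rule bounded_linear.has_derivative[OF bounded_linear_vec_nth])
    moreover have "(\<lambda>t. J (t *\<^sub>R v) $ (p, q)) = (\<lambda>t. t * (\<alpha> * (d q - d p)))"
      using pqE unfolding linear_scale[OF lin] Jv' by (simp add: v_def mult.assoc)
    ultimately have D1: "((\<lambda>t. G (t *\<^sub>R v) $ (p, q)) has_real_derivative (\<alpha> * (d q - d p))) (at 0)"
      unfolding has_field_derivative_def by (simp add: mult.commute[of _ "\<alpha> * (d q - d p)"])
    have pd: "path_diff EE (t *\<^sub>R v) u w = t * (d w - d u)" if "u \<in> P" "w \<in> P" for t u w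
      by (rule path_diff_lin[OF conn sub _ that]) (simp add: v_def)
    have Geq: "G (t *\<^sub>R v) $ (p, q) = (\<Sum>z\<in>P. a q z * sin (t * (d z - d q)) - a p z * sin (t * (d z - d p)))" for t
      using hG[OF pq] pd pqP by (simp cong: sum.cong)
    have D2: "((\<lambda>t. (\<Sum>z\<in>P. a q z * sin (t * (d z - d q)) - a p z * sin (t * (d z - d p)))) has_real_derivative
        (\<Sum>z\<in>P. a q z * (d z - d q) - a p z * (d z - d p))) (at 0)"
      by (rule DERIV_cong, (auto intro!: derivative_eq_intros)[1]) (simp add: mult.commute)
    have "\<alpha> * (d q - d p) = (\<Sum>z\<in>P. a q z * (d z - d q) - a p z * (d z - d p))"
      using DERIV_unique[OF D1 D2[folded Geq]] .
    hence "\<alpha> * (d q - d p) = (\<Sum>z\<in>P. a q z * (d z - d q)) - (\<Sum>z\<in>P. a p z * (d z - d p))"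
      by (simp add: sum_subtractf)
    thus ?thesis by (simp add: h_def algebra_simps)
  qed
  have hc: "h u = h j" if "u \<in> P" for u
    by (rule conn_const[OF conn that j]) (rule edge)
  have "(\<Sum>u\<in>P. h u) = (\<Sum>u\<in>P. \<Sum>z\<in>P. a u z * d z) - (\<Sum>u\<in>P. \<Sum>z\<in>P. a u z * d u) - \<alpha> * (\<Sum>u\<in>P. d u)"
    by (simp add: h_def sum_subtractf sum_distrib_left sum.distrib algebra_simps)
  also have "(\<Sum>u\<in>P. \<Sum>z\<in>P. a u z * d z) = (\<Sum>u\<in>P. \<Sum>z\<in>P. a u z * d u)"
    by (subst sum.swap) (simp add: sym)
  finally have "(\<Sum>u\<in>P. h u) = 0" using ds by simp
  moreover have "(\<Sum>u\<in>P. h u) = real (card P) * h j" using hc by simp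
  moreover have "real (card P) > 0" using Pne by (simp add: card_gt_0_iff)
  ultimately have "h j = 0" using Pne by simp
  thus ?thesis by (simp add: h_def)
qed

theorem theorem4:
  fixes a :: "'n::{finite,linorder} \<Rightarrow> 'n \<Rightarrow> real"
    and \<omega> :: "'n \<Rightarrow> real"
    and P1 P2 :: "'n set"
    and E1 E2 :: "('n \<times> 'n) set"
    and \<omega>1 \<omega>2 \<alpha> :: real
  assumes sym: "\<And>i j. a i j = a j i"
    and nonneg: "\<And>i j. a i j \<ge> 0"
    and noloop: "\<And>i. a i i = 0"
    and conn: "connected_on UNIV (graph_edges a)"
    and omega_pos: "\<And>i. \<omega> i > 0"
    and part: "P1 \<inter> P2 = {}" "P1 \<union> P2 = UNIV" "P1 \<noteq> {}" "P2 \<noteq> {}"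
    and conn1: "connected_on P1 (graph_edges a)"
    and conn2: "connected_on P2 (graph_edges a)"
    and A2: "\<And>i. i \<in> P1 \<Longrightarrow> \<omega> i = \<omega>1" "\<And>i. i \<in> P2 \<Longrightarrow> \<omega> i = \<omega>2"
    and A3: "\<And>i j. i \<in> P1 \<Longrightarrow> j \<in> P1 \<Longrightarrow> (\<Sum>k\<in>P2. a i k - a j k) = 0"
            "\<And>i j. i \<in> P2 \<Longrightarrow> j \<in> P2 \<Longrightarrow> (\<Sum>k\<in>P1. a i k - a j k) = 0"
    and order: "\<omega>1 \<le> \<omega>2"
    and gap: "\<And>i j. i \<in> P1 \<Longrightarrow> j \<in> P2 \<Longrightarrow> \<omega>2 - \<omega>1 > (\<Sum>k\<in>P2. a i k) + (\<Sum>k\<in>P1. a j k)"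
    and T1: "spanning_tree a P1 E1"
    and T2: "spanning_tree a P2 E2"
    and alpha_neg: "\<alpha> < 0"
    and jac: "\<exists>J. (F_intra a P1 P2 E1 E2 has_derivative J) (at 0) \<and>
                 (\<forall>v. (\<forall>e. e \<notin> E1 \<union> E2 \<longrightarrow> v $ e = 0) \<longrightarrow> J v = \<alpha> *\<^sub>R v)"
  shows "locally_exp_stable (kuramoto a \<omega>) (sync_manifold {P1, P2})"
proof -
  obtain i1 i2 where i1: "i1 \<in> P1" and i2: "i2 \<in> P2" using part by blast
  define s1 where "s1 = (\<Sum>k\<in>P2. a i1 k)"
  define s2 where "s2 = (\<Sum>k\<in>P1. a i2 k)"
  have row1: "(\<Sum>k\<in>P2. a i k) = s1" if "i \<in> P1" for i
    using A3(1)[OF that i1] by (simp add: s1_def sum_subtractf)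
  have row2: "(\<Sum>k\<in>P1. a i k) = s2" if "i \<in> P2" for i
    using A3(2)[OF that i2] by (simp add: s2_def sum_subtractf)
  have gap': "\<omega>2 - \<omega>1 > s1 + s2" using gap[OF i1 i2] by (simp add: s1_def s2_def)
  have s1n: "s1 \<ge> 0" "s2 \<ge> 0" unfolding s1_def s2_def by (intro sum_nonneg nonneg)+
  have spos: "s1 + s2 > 0"
  proof (rule ccontr)
    assume "\<not> s1 + s2 > 0"
    hence s10: "s1 = 0" using s1n by linarith
    have z: "a i k = 0" if "i \<in> P1" "k \<in> P2" for i k
    proof -
      have "(\<Sum>k\<in>P2. a i k) = 0" using row1[OF that(1)] s10 by simp
      thus ?thesis using that(2) by (simp add: sum_nonneg_eq_0_iff nonneg)
    qed
    have "(\<lambda>x. x \<in> P1) i1 = (\<lambda>x. x \<in> P1) i2"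
    proof (rule conn_const[OF conn])
      fix p q assume "(p, q) \<in> graph_edges a"
      hence pq: "a p q > 0" by (simp add: graph_edges_def)
      show "(p \<in> P1) = (q \<in> P1)"
      proof
        assume "p \<in> P1" show "q \<in> P1"
        proof (rule ccontr)
          assume "q \<notin> P1" hence "q \<in> P2" using part by blast
          thus False using z[OF \<open>p \<in> P1\<close>] pq by simp
        qed
      next
        assume "q \<in> P1" show "p \<in> P1"
        proof (rule ccontr)
          assume "p \<notin> P1" hence "p \<in> P2" using part by blast
          thus False using z[OF \<open>q \<in> P1\<close>] pq sym[of p q] by simp
        qed
      qed
    qed auto
    thus False using i1 i2 part by auto
  qed
  obtain J where hJ: "(F_intra a P1 P2 E1 E2 has_derivative J) (at 0)"
    and Jv: "\<And>v. (\<forall>e. e \<notin> E1 \<union> E2 \<longrightarrow> v $ e = 0) \<Longrightarrow> J v = \<alpha> *\<^sub>R v"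
    using jac by blast
  have E1s: "E1 \<subseteq> {(i, j). i \<in> P1 \<and> j \<in> P1 \<and> i < j \<and> a i j > 0}" and c1: "connected_on P1 E1"
    using T1 by (auto simp: spanning_tree_def)
  have E2s: "E2 \<subseteq> {(i, j). i \<in> P2 \<and> j \<in> P2 \<and> i < j \<and> a i j > 0}" and c2: "connected_on P2 E2"
    using T2 by (auto simp: spanning_tree_def)
  have lap1: "(\<Sum>z\<in>P1. a j z * (d z - d j)) = \<alpha> * d j" if "(\<Sum>z\<in>P1. d z) = 0" "j \<in> P1" for d j
  proof (rule lap_from_jac[OF sym c1 _ _ _ hJ Jv _ that])
    show "E1 \<subseteq> E1 \<union> E2" by blast
    show "\<And>i j. (i, j) \<in> E1 \<Longrightarrow> i \<in> P1 \<and> j \<in> P1" using E1s by blast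
    show "\<And>x i j. (i, j) \<in> E1 \<Longrightarrow> F_intra a P1 P2 E1 E2 x $ (i, j) =
        (\<Sum>z\<in>P1. a j z * sin (path_diff (E1 \<union> E2) x j z) - a i z * sin (path_diff (E1 \<union> E2) x i z))"
      by (simp add: F_intra_def)
    show "P1 \<noteq> {}" using part by blast
  qed
  have lap2: "(\<Sum>z\<in>P2. a j z * (d z - d j)) = \<alpha> * d j" if "(\<Sum>z\<in>P2. d z) = 0" "j \<in> P2" for d j
  proof (rule lap_from_jac[OF sym c2 _ _ _ hJ Jv _ that])
    show "E2 \<subseteq> E1 \<union> E2" by blast
    show "\<And>i j. (i, j) \<in> E2 \<Longrightarrow> i \<in> P2 \<and> j \<in> P2" using E2s by blast
    show "\<And>x i j. (i, j) \<in> E2 \<Longrightarrow> F_intra a P1 P2 E1 E2 x $ (i, j) =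
        (\<Sum>z\<in>P2. a j z * sin (path_diff (E1 \<union> E2) x j z) - a i z * sin (path_diff (E1 \<union> E2) x i z))"
    proof -
      fix x i j assume ij: "(i, j) \<in> E2"
      hence "(i, j) \<notin> E1" using E1s E2s part by blast
      thus "F_intra a P1 P2 E1 E2 x $ (i, j) =
        (\<Sum>z\<in>P2. a j z * sin (path_diff (E1 \<union> E2) x j z) - a i z * sin (path_diff (E1 \<union> E2) x i z))"
        using ij by (simp add: F_intra_def)
    qed
    show "P2 \<noteq> {}" using part by blast
  qed
  interpret K: kur a P1 P2 \<omega> \<omega>1 \<omega>2 \<alpha> s1 s2
    by (unfold_locales) (use sym nonneg noloop part A2 row1 row2 lap1 lap2 gap' spos alpha_neg in auto)
  show ?thesis by (rule K.final)
qed


end
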